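(* Let $n,m\ge1$, $r>0$, and let $\mathbf b_1,\dots,\mathbf b_m\in[0,\infty)^n$ be nonzero vectors. Put $D_{ij}=\frac{r}{m}(\mathbf b_i\cdot\mathbf b_j)$ and $\overline D=\max_{i,j}D_{ij}$. Define $\alpha^{(t)}\in\mathbb{R}^m$, $t\ge0$, by $\alpha^{(0)}_k=\sqrt{1/(\overline D m)}$ for all $k$, and, given $\alpha^{(t)}$: let $E_i^{(t)}=\sum_{j=1}^m D_{ij}\alpha^{(t)}_i\alpha^{(t)}_j-1$, choose $k=k_t$ with $|E^{(t)}_k|\ge|E^{(t)}_i|$ for all $i$, set $\alpha^{(t+1)}_i=\alpha^{(t)}_i$ for $i\neq k$ and $\alpha^{(t+1)}_k=\frac{-s+\sqrt{s^2+4D_{kk}}}{2D_{kk}}$ with $s=\sum_{i\ne k}D_{ik}\alpha^{(t)}_i$. Let $E^{(t)}=\sum_{i=1}^m|E^{(t)}_i|$ and $E^\infty=\lim_{t\to\infty}E^{(t)}$. If $E^\infty>0$, then there is $c>0$ such that for every $t\ge0$, with $k=k_t$, $$\big|\alpha^{(t+1)}_k-\alpha^{(t)}_k\big|\,D_{kk}\,\alpha^{(t)}_k\ \ge\ c .$$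
   Context: The limit $E^\infty$ exists because $(E^{(t)})$ is a nonincreasing sequence of nonnegative numbers. *)

theory Defs
  imports Complex_Main
begin

text \<open>Vectors b_1..b_m in [0,inf)^n are encoded as b :: nat => nat => real,
  with b i j the j-th coordinate (j < n) of the vector with index i < m (0-based).\<close>

definition dotp :: "nat \<Rightarrow> (nat \<Rightarrow> real) \<Rightarrow> (nat \<Rightarrow> real) \<Rightarrow> real" where
  "dotp n x y = (\<Sum>l<n. x l * y l)"

definition Dm :: "real \<Rightarrow> nat \<Rightarrow> nat \<Rightarrow> (nat \<Rightarrow> nat \<Rightarrow> real) \<Rightarrow> nat \<Rightarrow> nat \<Rightarrow> real" where
  "Dm r m n b i j = r / real m * dotp n (b i) (b j)"

definition Dbar :: "real \<Rightarrow> nat \<Rightarrow> nat \<Rightarrow> (nat \<Rightarrow> nat \<Rightarrow> real) \<Rightarrow> real" where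
  "Dbar r m n b = Max {Dm r m n b i j | i j. i < m \<and> j < m}"

definition Ei :: "real \<Rightarrow> nat \<Rightarrow> nat \<Rightarrow> (nat \<Rightarrow> nat \<Rightarrow> real) \<Rightarrow> (nat \<Rightarrow> real) \<Rightarrow> nat \<Rightarrow> real" where
  "Ei r m n b a i = (\<Sum>j<m. Dm r m n b i j * a i * a j) - 1"

definition Etot :: "real \<Rightarrow> nat \<Rightarrow> nat \<Rightarrow> (nat \<Rightarrow> nat \<Rightarrow> real) \<Rightarrow> (nat \<Rightarrow> real) \<Rightarrow> real" where
  "Etot r m n b a = (\<Sum>i<m. \<bar>Ei r m n b a i\<bar>)"

end

theory Submission
  imports Defs
begin

lemma Ei_alt: "Ei r m n b a i = a i * (\<Sum>j<m. Dm r m n b i j * a j) - 1"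
  unfolding Ei_def by (simp add: sum_distrib_left mult.assoc mult.left_commute)

lemma Dm_sym: "Dm r m n b i j = Dm r m n b j i"
  unfolding Dm_def dotp_def by (simp add: mult.commute)

lemma P_split:
  assumes "k < m"
  shows "(\<Sum>j<m. Dm r m n b k j * a j) = (\<Sum>i\<in>{..<m}-{k}. Dm r m n b i k * a i) + Dm r m n b k k * a k"
proof -
  have "(\<Sum>j<m. Dm r m n b k j * a j) = Dm r m n b k k * a k + (\<Sum>j\<in>{..<m}-{k}. Dm r m n b k j * a j)"
    by (rule sum.remove) (use assms in auto)
  also have "(\<Sum>j\<in>{..<m}-{k}. Dm r m n b k j * a j) = (\<Sum>i\<in>{..<m}-{k}. Dm r m n b i k * a i)"
    by (rule sum.cong) (auto simp: Dm_sym)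
  finally show ?thesis by simp
qed

lemma P_update:
  assumes "k < m" "\<And>i. i < m \<Longrightarrow> i \<noteq> k \<Longrightarrow> a' i = a i"
  shows "(\<Sum>j<m. Dm r m n b i j * a' j) = (\<Sum>j<m. Dm r m n b i j * a j) + Dm r m n b i k * (a' k - a k)"
proof -
  have "(\<Sum>j<m. Dm r m n b i j * a' j) = Dm r m n b i k * a' k + (\<Sum>j\<in>{..<m}-{k}. Dm r m n b i j * a' j)"
    by (rule sum.remove) (use assms in auto)
  moreover have "(\<Sum>j<m. Dm r m n b i j * a j) = Dm r m n b i k * a k + (\<Sum>j\<in>{..<m}-{k}. Dm r m n b i j * a j)"
    by (rule sum.remove) (use assms in auto)
  moreover have "(\<Sum>j\<in>{..<m}-{k}. Dm r m n b i j * a' j) = (\<Sum>j\<in>{..<m}-{k}. Dm r m n b i j * a j)"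
    by (rule sum.cong) (auto simp: assms)
  ultimately show ?thesis by (simp add: algebra_simps)
qed

lemma root_eq:
  fixes d s x :: real
  assumes "d > 0" "x = (- s + sqrt (s^2 + 4*d)) / (2*d)"
  shows "x * (s + d*x) = 1 \<and> x > 0"
proof -
  define q where "q = sqrt (s^2 + 4*d)"
  have q2: "q^2 = s^2 + 4*d" unfolding q_def using assms(1)
    by (simp add: add_nonneg_pos)
  have "\<bar>s\<bar> = sqrt (s^2)" by simp
  also have "\<dots> < q" unfolding q_def using assms(1) by (intro real_sqrt_less_mono) simp
  finally have qs: "\<bar>s\<bar> < q" .
  have x2: "2*d*x = q - s" using assms unfolding q_def by simp
  have "x > 0" using qs assms(1) x2
    by (smt (verit) mult_pos_pos zero_less_mult_iff)
  moreover have "x * (s + d*x) = 1"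
  proof -
    have "4*d*(x * (s + d*x)) = (2*d*x) * (2*s + 2*d*x)" by (simp add: algebra_simps)
    also have "\<dots> = (q - s)*(q + s)" using x2 by simp
    also have "\<dots> = q^2 - s^2" by (simp add: algebra_simps power2_eq_square)
    also have "\<dots> = 4*d" using q2 by simp
    finally show ?thesis using assms(1) by simp
  qed
  ultimately show ?thesis by simp
qed

lemma step_lemma:
  assumes k: "k < m"
    and nonneg: "\<And>i. i < m \<Longrightarrow> a i \<ge> 0"
    and Dnn: "\<And>i j. i < m \<Longrightarrow> j < m \<Longrightarrow> Dm r m n b i j \<ge> 0"
    and other: "\<And>i. i < m \<Longrightarrow> i \<noteq> k \<Longrightarrow> a' i = a i"
    and s_def: "s = (\<Sum>i\<in>{..<m}-{k}. Dm r m n b i k * a i)"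
    and quad: "a' k * (s + Dm r m n b k k * a' k) = 1"
    and xnn: "a' k \<ge> 0"
  shows "Ei r m n b a k = (a k - a' k) * (s + Dm r m n b k k * (a k + a' k))"
    and "Etot r m n b a' \<le> Etot r m n b a"
proof -
  let ?D = "Dm r m n b"
  have Pk: "(\<Sum>j<m. ?D k j * a j) = s + ?D k k * a k" using P_split[OF k] s_def by simp
  have "Ei r m n b a k = a k * (s + ?D k k * a k) - a' k * (s + ?D k k * a' k)"
    using Pk quad by (simp add: Ei_alt)
  also have "\<dots> = (a k - a' k) * (s + ?D k k * (a k + a' k))" by (simp add: algebra_simps)
  finally show Ek: "Ei r m n b a k = (a k - a' k) * (s + ?D k k * (a k + a' k))" .
  have PU: "(\<Sum>j<m. ?D i j * a' j) = (\<Sum>j<m. ?D i j * a j) + ?D i k * (a' k - a k)" for i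
    by (rule P_update) (use k other in auto)
  have E'k: "Ei r m n b a' k = 0"
    using PU[of k] Pk quad by (simp add: Ei_alt algebra_simps)
  have E'i: "Ei r m n b a' i = Ei r m n b a i + a i * ?D i k * (a' k - a k)" if "i < m" "i \<noteq> k" for i
    unfolding Ei_alt PU other[OF that] by (simp add: algebra_simps)
  have fin: "finite ({..<m} - {k})" by simp
  have "Etot r m n b a' = \<bar>Ei r m n b a' k\<bar> + (\<Sum>i\<in>{..<m}-{k}. \<bar>Ei r m n b a' i\<bar>)"
    unfolding Etot_def by (rule sum.remove) (use k in auto)
  also have "\<dots> = (\<Sum>i\<in>{..<m}-{k}. \<bar>Ei r m n b a i + a i * ?D i k * (a' k - a k)\<bar>)"
    using E'k E'i by (auto intro!: sum.cong)
  also have "\<dots> \<le> (\<Sum>i\<in>{..<m}-{k}. \<bar>Ei r m n b a i\<bar> + ?D i k * a i * \<bar>a k - a' k\<bar>)"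
  proof (rule sum_mono)
    fix i assume i: "i \<in> {..<m}-{k}"
    have "\<bar>a i * ?D i k * (a' k - a k)\<bar> = ?D i k * a i * \<bar>a k - a' k\<bar>"
      using nonneg[of i] Dnn[of i k] i k by (simp add: abs_mult abs_minus_commute)
    thus "\<bar>Ei r m n b a i + a i * ?D i k * (a' k - a k)\<bar> \<le> \<bar>Ei r m n b a i\<bar> + ?D i k * a i * \<bar>a k - a' k\<bar>"
      using abs_triangle_ineq by (metis)
  qed
  also have "\<dots> = (\<Sum>i\<in>{..<m}-{k}. \<bar>Ei r m n b a i\<bar>) + \<bar>a k - a' k\<bar> * s"
    by (simp add: sum.distrib s_def sum_distrib_left sum_distrib_right mult.commute)
  also have "\<dots> \<le> (\<Sum>i\<in>{..<m}-{k}. \<bar>Ei r m n b a i\<bar>) + \<bar>a k - a' k\<bar> * (s + ?D k k * (a k + a' k))"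
    using Dnn[OF k k] nonneg[OF k] xnn by (simp add: mult_left_mono)
  also have "\<bar>a k - a' k\<bar> * (s + ?D k k * (a k + a' k)) = \<bar>Ei r m n b a k\<bar>"
  proof -
    have "s \<ge> 0" unfolding s_def using Dnn nonneg k by (auto intro!: sum_nonneg)
    hence "s + ?D k k * (a k + a' k) \<ge> 0" using Dnn[OF k k] nonneg[OF k] xnn by simp
    thus ?thesis using Ek by (simp add: abs_mult)
  qed
  also have "(\<Sum>i\<in>{..<m}-{k}. \<bar>Ei r m n b a i\<bar>) + \<bar>Ei r m n b a k\<bar> = Etot r m n b a"
    unfolding Etot_def using sum.remove[of "{..<m}" k "\<lambda>i. \<bar>Ei r m n b a i\<bar>"] k by simp
  finally show "Etot r m n b a' \<le> Etot r m n b a" .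
qed

theorem lemma4:
  fixes n m :: nat and r :: real
    and b :: "nat \<Rightarrow> nat \<Rightarrow> real"
    and \<alpha> :: "nat \<Rightarrow> nat \<Rightarrow> real"
    and kt :: "nat \<Rightarrow> nat"
  assumes "n \<ge> 1" and "m \<ge> 1" and "r > 0"
    and b_nonneg: "\<And>i l. i < m \<Longrightarrow> l < n \<Longrightarrow> b i l \<ge> 0"
    and b_nonzero: "\<And>i. i < m \<Longrightarrow> \<exists>l<n. b i l \<noteq> 0"
    and init: "\<And>k. k < m \<Longrightarrow> \<alpha> 0 k = sqrt (1 / (Dbar r m n b * real m))"
    and k_range: "\<And>t. kt t < m"
    and k_max: "\<And>t i. i < m \<Longrightarrow>
        \<bar>Ei r m n b (\<alpha> t) (kt t)\<bar> \<ge> \<bar>Ei r m n b (\<alpha> t) i\<bar>"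
    and step_other: "\<And>t i. i < m \<Longrightarrow> i \<noteq> kt t \<Longrightarrow> \<alpha> (Suc t) i = \<alpha> t i"
    and step_k: "\<And>t. \<alpha> (Suc t) (kt t) =
        (let k = kt t; s = (\<Sum>i\<in>{..<m} - {k}. Dm r m n b i k * \<alpha> t i)
         in (- s + sqrt (s\<^sup>2 + 4 * Dm r m n b k k)) / (2 * Dm r m n b k k))"
    and Einf_pos: "lim (\<lambda>t. Etot r m n b (\<alpha> t)) > 0"
  shows "\<exists>c>0. \<forall>t. \<bar>\<alpha> (Suc t) (kt t) - \<alpha> t (kt t)\<bar> * Dm r m n b (kt t) (kt t) * \<alpha> t (kt t) \<ge> c"
proof -
  let ?D = "Dm r m n b"
  let ?DB = "Dbar r m n b"
  have m0: "real m > 0" using assms(2) by simp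
  have Dnn: "\<And>i j. i<m \<Longrightarrow> j<m \<Longrightarrow> ?D i j \<ge> 0"
    unfolding Dm_def dotp_def using assms(3) b_nonneg
    by (intro mult_nonneg_nonneg sum_nonneg) auto
  have Dpos: "?D i i > 0" if i: "i<m" for i
  proof -
    obtain l where l: "l<n" "b i l \<noteq> 0" using b_nonzero[OF i] by blast
    have "b i l * b i l \<le> dotp n (b i) (b i)" unfolding dotp_def
      by (rule member_le_sum) (use l in auto)
    moreover have "b i l * b i l > 0" using l(2) not_real_square_gt_zero by blast
    ultimately have "dotp n (b i) (b i) > 0" by linarith
    thus ?thesis unfolding Dm_def using assms(3) m0 by simp
  qed
  have finS: "finite {?D i j | i j. i < m \<and> j < m}"
  proof -
    have "{?D i j | i j. i < m \<and> j < m} = (\<lambda>(i,j). ?D i j) ` ({..<m} \<times> {..<m})" by auto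
    thus ?thesis by simp
  qed
  have Dle: "\<And>i j. i<m \<Longrightarrow> j<m \<Longrightarrow> ?D i j \<le> ?DB"
    unfolding Dbar_def by (rule Max_ge[OF finS]) auto
  have DBpos: "?DB > 0" using Dle[of 0 0] Dpos[of 0] assms(2) by simp
  obtain dmin where dmin: "dmin > 0" "\<And>i. i<m \<Longrightarrow> dmin \<le> ?D i i"
  proof -
    let ?S = "(\<lambda>i. ?D i i) ` {..<m}"
    have f: "finite ?S" "?S \<noteq> {}" using assms(2) by (auto simp: lessThan_empty_iff)
    have "Min ?S \<in> ?S" using Min_in[OF f] .
    hence "Min ?S > 0" using Dpos by auto
    moreover have "\<And>i. i<m \<Longrightarrow> Min ?S \<le> ?D i i" using f by auto
    ultimately show ?thesis using that by blast
  qed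
  define s where "s t = (\<Sum>i\<in>{..<m}-{kt t}. ?D i (kt t) * \<alpha> t i)" for t
  have quad: "\<alpha> (Suc t) (kt t) * (s t + ?D (kt t) (kt t) * \<alpha> (Suc t) (kt t)) = 1
      \<and> \<alpha> (Suc t) (kt t) > 0" for t
    by (rule root_eq[OF Dpos[OF k_range]]) (simp add: step_k s_def Let_def)
  define a0 where "a0 = sqrt (1 / (?DB * real m))"
  have a0pos: "a0 > 0" unfolding a0_def using DBpos m0 by simp
  have pos: "\<alpha> t i > 0" if "i < m" for t i
    using that
  proof (induction t arbitrary: i)
    case 0 thus ?case using init a0pos a0_def by simp
  next
    case (Suc t) thus ?case using quad[of t] step_other[of i t] by (cases "i = kt t") auto
  qed
  have posle: "\<And>t i. i < m \<Longrightarrow> 0 \<le> \<alpha> t i" using pos less_imp_le by blast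
  have stepl: "Ei r m n b (\<alpha> t) (kt t) = (\<alpha> t (kt t) - \<alpha> (Suc t) (kt t)) * (s t + ?D (kt t) (kt t) * (\<alpha> t (kt t) + \<alpha> (Suc t) (kt t)))"
     "Etot r m n b (\<alpha> (Suc t)) \<le> Etot r m n b (\<alpha> t)" for t
    using step_lemma[OF k_range[of t], of "\<alpha> t" r n b "\<alpha> (Suc t)" "s t"] pos Dnn step_other quad[of t]
    by (auto simp: s_def less_imp_le)
  have dec: "decseq (\<lambda>t. Etot r m n b (\<alpha> t))"
    using stepl(2) by (simp add: decseq_Suc_iff)
  have Enn: "\<forall>t. 0 \<le> Etot r m n b (\<alpha> t)" unfolding Etot_def by (auto intro: sum_nonneg)
  obtain L where L: "(\<lambda>t. Etot r m n b (\<alpha> t)) \<longlonglongrightarrow> L" "\<forall>t. L \<le> Etot r m n b (\<alpha> t)"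
    using decseq_convergent[OF dec Enn] by blast
  have Lpos: "L > 0" using Einf_pos limI[OF L(1)] by simp
  have Ek: "L / real m \<le> \<bar>Ei r m n b (\<alpha> t) (kt t)\<bar>" for t
  proof -
    have "Etot r m n b (\<alpha> t) \<le> (\<Sum>i<m. \<bar>Ei r m n b (\<alpha> t) (kt t)\<bar>)"
      unfolding Etot_def by (rule sum_mono) (use k_max in auto)
    also have "\<dots> = real m * \<bar>Ei r m n b (\<alpha> t) (kt t)\<bar>" by simp
    finally have "L \<le> real m * \<bar>Ei r m n b (\<alpha> t) (kt t)\<bar>" using L(2) by (meson order_trans)
    thus ?thesis using m0 by (simp add: divide_le_eq mult.commute)
  qed
  define E0 where "E0 = Etot r m n b (\<alpha> 0)"
  define U where "U = sqrt ((1 + E0) / dmin)"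
  have upper: "\<alpha> t i \<le> U" if i: "i < m" for t i
  proof -
    have "Etot r m n b (\<alpha> t) \<le> E0" unfolding E0_def using dec by (simp add: decseq_def)
    moreover have "\<bar>Ei r m n b (\<alpha> t) i\<bar> \<le> Etot r m n b (\<alpha> t)" unfolding Etot_def
      by (rule member_le_sum) (use i in auto)
    ultimately have E: "Ei r m n b (\<alpha> t) i \<le> E0" by linarith
    have "?D i i * \<alpha> t i \<le> (\<Sum>j<m. ?D i j * \<alpha> t j)"
      by (rule member_le_sum) (use i Dnn posle in \<open>auto intro!: mult_nonneg_nonneg\<close>)
    hence "\<alpha> t i * (?D i i * \<alpha> t i) \<le> \<alpha> t i * (\<Sum>j<m. ?D i j * \<alpha> t j)"
      using pos[OF i] by (simp add: mult_left_mono)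
    hence "\<alpha> t i * (?D i i * \<alpha> t i) \<le> 1 + E0" using E by (simp add: Ei_alt)
    moreover have "dmin * (\<alpha> t i)^2 \<le> \<alpha> t i * (?D i i * \<alpha> t i)"
    proof -
      have "dmin * (\<alpha> t i * \<alpha> t i) \<le> ?D i i * (\<alpha> t i * \<alpha> t i)"
        using dmin(2)[OF i] by (rule mult_right_mono) simp
      thus ?thesis by (simp add: power2_eq_square mult_ac)
    qed
    ultimately have "dmin * (\<alpha> t i)^2 \<le> 1 + E0" by linarith
    hence "(\<alpha> t i)^2 \<le> (1 + E0) / dmin" using dmin(1) by (simp add: le_divide_eq mult.commute)
    thus ?thesis unfolding U_def by (rule real_le_rsqrt)
  qed
  have Upos: "U > 0" using upper[of 0 0] pos[of 0 0] assms(2) by simp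
  have sb: "0 \<le> s t \<and> s t \<le> real m * ?DB * U" for t
  proof -
    let ?k = "kt t"
    have "s t \<le> (\<Sum>i<m. ?D i ?k * \<alpha> t i)" unfolding s_def
      by (rule sum_mono2) (use Dnn posle k_range in \<open>auto intro!: mult_nonneg_nonneg\<close>)
    also have "\<dots> \<le> (\<Sum>i<m. ?DB * U)"
      by (rule sum_mono) (use Dnn posle k_range Dle upper DBpos in \<open>auto intro!: mult_mono\<close>)
    also have "\<dots> = real m * ?DB * U" by simp
    finally show ?thesis unfolding s_def using Dnn posle k_range
      by (auto intro!: sum_nonneg mult_nonneg_nonneg)
  qed
  define lo where "lo = min a0 (1 / ((real m + 1) * ?DB * U))"
  have lopos: "lo > 0" unfolding lo_def using a0pos DBpos Upos m0 by simp
  have xlow: "\<alpha> (Suc t) (kt t) \<ge> 1 / ((real m + 1) * ?DB * U)" for t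
  proof -
    let ?k = "kt t" let ?x = "\<alpha> (Suc t) (kt t)"
    let ?S = "s t + ?D ?k ?k * ?x"
    have "?D ?k ?k * ?x \<le> ?DB * U"
      using Dle[OF k_range k_range] upper[OF k_range] posle[OF k_range] Dnn[OF k_range k_range] DBpos
      by (intro mult_mono) (auto simp: less_imp_le)
    hence Sle: "?S \<le> (real m + 1) * ?DB * U" using sb[of t] by (simp add: algebra_simps)
    have Spos: "?S > 0" using sb[of t] Dpos[OF k_range] pos[OF k_range, of "Suc t"]
      by (simp add: add_nonneg_pos)
    have xe: "?x = 1 / ?S" using quad[of t] Spos by (simp add: field_simps)
    have "1 / ((real m + 1) * ?DB * U) \<le> 1 / ?S" using Sle Spos by (intro divide_left_mono) auto
    thus ?thesis using xe by linarith
  qed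
  have lower: "\<alpha> t i \<ge> lo" if "i < m" for t i
    using that
  proof (induction t arbitrary: i)
    case 0 thus ?case using init a0_def lo_def by simp
  next
    case (Suc t) thus ?case using xlow[of t] step_other[of i t] lo_def by (cases "i = kt t") auto
  qed
  define M where "M = (real m + 2) * ?DB * U"
  have Mpos: "M > 0" unfolding M_def using DBpos Upos by simp
  define c where "c = (L / real m) / M * dmin * lo"
  have cpos: "c > 0" unfolding c_def using Lpos m0 Mpos dmin(1) lopos by simp
  show ?thesis
  proof (intro exI[of _ c] conjI allI cpos)
    fix t
    let ?k = "kt t" let ?x = "\<alpha> (Suc t) (kt t)" let ?a = "\<alpha> t (kt t)"
    have kr: "kt t < m" by (rule k_range)
    let ?F = "s t + ?D ?k ?k * (?a + ?x)"
    let ?\<delta> = "\<bar>?x - ?a\<bar>"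
    have Fnn: "?F \<ge> 0" using sb[of t] Dnn[OF kr kr] posle[OF kr, of t] posle[OF kr, of "Suc t"]
      by simp
    have "?D ?k ?k * (?a + ?x) \<le> ?DB * (U + U)"
      using Dle[OF kr kr] upper[OF kr, of t] upper[OF kr, of "Suc t"]
        posle[OF kr, of t] posle[OF kr, of "Suc t"] Dnn[OF kr kr] DBpos
      by (intro mult_mono) (auto simp: less_imp_le)
    hence FM: "?F \<le> M" using sb[of t] unfolding M_def by (simp add: algebra_simps)
    have "\<bar>Ei r m n b (\<alpha> t) ?k\<bar> = ?\<delta> * ?F" using stepl(1)[of t] Fnn
      by (simp add: abs_mult abs_minus_commute)
    also have "\<dots> \<le> ?\<delta> * M" using FM by (simp add: mult_left_mono)
    finally have "L / real m \<le> ?\<delta> * M" using Ek[of t] by linarith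
    hence d: "(L / real m) / M \<le> ?\<delta>" using Mpos by (metis pos_divide_le_eq)
    have "c \<le> ?\<delta> * ?D ?k ?k * lo" unfolding c_def
      using d dmin Dpos[OF kr] lopos Lpos m0 Mpos kr
      by (intro mult_mono) auto
    also have "\<dots> \<le> ?\<delta> * ?D ?k ?k * ?a"
      using lower[OF kr, of t] Dpos[OF kr] by (simp add: mult_left_mono)
    finally show "c \<le> ?\<delta> * ?D ?k ?k * ?a" .
  qed
qed

end
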